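(* Let $\langle B,\wedge,{}'\rangle$ be an algebra with $\wedge$ binary and ${}'$ unary satisfying $x\wedge y\approx y\wedge x$, $x\wedge(y\wedge z)\approx(x\wedge y)\wedge z$, $x''\approx x$, and $x'\approx (x\wedge y)'\wedge(x\wedge y')'$. Then for all $x,y\in B$: $x\wedge(x\wedge y')'=y\wedge(y\wedge x')'$. *)

theory Defs
  imports Main
begin

end

theory Submission
  imports Defs
begin

lemma aux:
  fixes meet :: "'b \<Rightarrow> 'b \<Rightarrow> 'b" and cpl :: "'b \<Rightarrow> 'b"
  assumes comm: "\<And>x y. meet x y = meet y x"
    and assoc: "\<And>x y z. meet x (meet y z) = meet (meet x y) z"
    and invol: "\<And>x. cpl (cpl x) = x"
    and rob: "\<And>x y. cpl x = meet (cpl (meet x y)) (cpl (meet x (cpl y)))"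
  shows "meet x (cpl (meet x (cpl y))) = meet y (cpl (meet y (cpl x)))"
proof -
  have f5: "meet (cpl (meet b bb)) (meet (cpl (meet b (cpl bb))) ba) = meet (cpl b) ba" for b ba bb
  proof -
    have "meet (cpl b) ba = meet (meet (cpl (meet b bb)) (cpl (meet b (cpl bb)))) ba"
      by (rule arg_cong[where f="\<lambda>z. meet z ba"], rule rob)
    then show ?thesis by (simp only: assoc)
  qed
  have f7: "meet (cpl (meet ba b)) (cpl (cpl b)) = meet (cpl ba) (cpl (meet (cpl b) (cpl ba)))" for b ba
  proof -
    have e: "meet (cpl (meet ba (cpl b))) (cpl (meet (cpl b) (cpl ba))) = cpl (cpl b)"
      using rob[of "cpl b" ba] by (simp only: comm[of ba "cpl b"])
    show ?thesis
      using f5[of ba b "cpl (meet (cpl b) (cpl ba))"] by (simp only: e)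
  qed
  have f8: "meet b (cpl (meet ba b)) = meet (cpl ba) (cpl (meet (cpl ba) (cpl b)))" for b ba
  proof -
    have "meet b (cpl (meet ba b)) = meet (cpl (meet ba b)) (cpl (cpl b))" by (simp only: invol comm)
    also have "\<dots> = meet (cpl ba) (cpl (meet (cpl b) (cpl ba)))" by (rule f7)
    also have "meet (cpl b) (cpl ba) = meet (cpl ba) (cpl b)" by (rule comm)
    finally show ?thesis .
  qed
  have f9: "meet ba (cpl (meet (cpl b) ba)) = meet b (cpl (meet b (cpl ba)))" for b ba
    using f8[of ba "cpl b"] by (simp only: invol)
  show ?thesis
    using f9[of y x] by (simp only: comm)
qed

theorem lemma2p3:
  fixes meet :: "'b \<Rightarrow> 'b \<Rightarrow> 'b" and cpl :: "'b \<Rightarrow> 'b"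
  assumes comm: "\<And>x y. meet x y = meet y x"
    and assoc: "\<And>x y z. meet x (meet y z) = meet (meet x y) z"
    and invol: "\<And>x. cpl (cpl x) = x"
    and rob: "\<And>x y. cpl x = meet (cpl (meet x y)) (cpl (meet x (cpl y)))"
  shows "\<And>x y. meet x (cpl (meet x (cpl y))) = meet y (cpl (meet y (cpl x)))"
  by (rule aux[where meet=meet and cpl=cpl, OF comm assoc invol rob])

end
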